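(* Let $V=\mathbb{C}^n$ be the defining representation of $GL_n(\mathbb{C})$ and $k_1,\dots,k_m\ge 0$. Let $\mu=(\mu_1,\dots,\mu_\ell)$ be a partition of $k_1+\dots+k_m$ with at most $n$ parts. Then the dimension of the space of $S_n$-invariants in the symmetrized weight space $(\mathrm{Sym}^{k_1}(V)\otimes\dots\otimes\mathrm{Sym}^{k_m}(V))_{\bar\mu}$ equals the number of multiset partitions of $\{1^{k_1},2^{k_2},\dots,m^{k_m}\}$ with parts of sizes $\mu_1,\dots,\mu_\ell$. In particular, the dimension of the space of $S_n$-invariants in $\mathrm{Sym}^{k_1}(V)\otimes\dots\otimes\mathrm{Sym}^{k_m}(V)$ equals the number of multiset partitions of $\{1^{k_1},2^{k_2},\dots,m^{k_m}\}$ with at most $n$ parts.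
   Context: $S_n\subset GL_n(\mathbb{C})$ is the subgroup of permutation matrices and $T$ the diagonal torus. For a representation $W$ of $GL_n$ and a weight $\mu$ of $T$ (here $\mu$ is padded with zeros to length $n$), the symmetrized weight space $W_{\bar\mu}$ is the direct sum of the $T$-weight spaces of $W$ for all weights in the $S_n$-orbit of $\mu$; it is stable under $S_n$. A multiset partition of a multiset $M$ is a multiset of nonempty sub-multisets (parts) of $M$ whose multiplicities add up to those of $M$; the size of a part is its cardinality counted with multiplicity. $\{1^{k_1},\dots,m^{k_m}\}$ is the multiset containing $i$ with multiplicity $k_i$. *)

theory Defs
  imports Complex_Main "HOL-Library.Function_Algebras" "HOL-Library.Multiset"
    "HOL-Combinatorics.Permutations"
begin

text \<open>Variables x_{j,i} (j < m block index, i < n coordinate index).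
  Sym^{k_1}(V) \<otimes> ... \<otimes> Sym^{k_m}(V) is the space of polynomials in the x_{j,i}
  that are homogeneous of degree k_j in block j; it has the basis of monomials,
  encoded by exponent functions e j i.  A vector is a complex-valued function on
  exponent functions that vanishes off the set of admissible monomials.\<close>

definition monoms :: "nat \<Rightarrow> nat list \<Rightarrow> (nat \<Rightarrow> nat \<Rightarrow> nat) set" where
  "monoms n ks = {e. (\<forall>j i. (length ks \<le> j \<or> n \<le> i) \<longrightarrow> e j i = 0) \<and>
                     (\<forall>j < length ks. (\<Sum>i<n. e j i) = ks ! j)}"

definition tensor_sym :: "nat \<Rightarrow> nat list \<Rightarrow> ((nat \<Rightarrow> nat \<Rightarrow> nat) \<Rightarrow> complex) set" where
  "tensor_sym n ks = {f. \<forall>e. e \<notin> monoms n ks \<longrightarrow> f e = 0}"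

text \<open>T-weight of a monomial: t = diag(t_0,...,t_{n-1}) acts on x_{j,i} by t_i.\<close>
definition mweight :: "nat list \<Rightarrow> (nat \<Rightarrow> nat \<Rightarrow> nat) \<Rightarrow> (nat \<Rightarrow> nat)" where
  "mweight ks e = (\<lambda>i. \<Sum>j<length ks. e j i)"

definition pad :: "nat list \<Rightarrow> nat \<Rightarrow> nat" where
  "pad \<mu> = (\<lambda>i. if i < length \<mu> then \<mu> ! i else 0)"

definition weight_orbit :: "nat \<Rightarrow> (nat \<Rightarrow> nat) \<Rightarrow> (nat \<Rightarrow> nat) set" where
  "weight_orbit n w = {w \<circ> \<sigma> | \<sigma>. \<sigma> permutes {..<n}}"

definition sym_weight_space ::
  "nat \<Rightarrow> nat list \<Rightarrow> nat list \<Rightarrow> ((nat \<Rightarrow> nat \<Rightarrow> nat) \<Rightarrow> complex) set" where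
  "sym_weight_space n ks \<mu> = {f \<in> tensor_sym n ks.
      \<forall>e. f e \<noteq> 0 \<longrightarrow> mweight ks e \<in> weight_orbit n (pad \<mu>)}"

text \<open>Action of a permutation matrix: x_{j,i} \<mapsto> x_{j,\<sigma> i} on monomials.\<close>
definition perm_act ::
  "(nat \<Rightarrow> nat) \<Rightarrow> ((nat \<Rightarrow> nat \<Rightarrow> nat) \<Rightarrow> complex) \<Rightarrow> ((nat \<Rightarrow> nat \<Rightarrow> nat) \<Rightarrow> complex)" where
  "perm_act \<sigma> f = (\<lambda>e. f (\<lambda>j i. e j (\<sigma> i)))"

definition Sn_invariants ::
  "nat \<Rightarrow> ((nat \<Rightarrow> nat \<Rightarrow> nat) \<Rightarrow> complex) set \<Rightarrow> ((nat \<Rightarrow> nat \<Rightarrow> nat) \<Rightarrow> complex) set" where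
  "Sn_invariants n W = {f \<in> W. \<forall>\<sigma>. \<sigma> permutes {..<n} \<longrightarrow> perm_act \<sigma> f = f}"

definition cdim :: "('a \<Rightarrow> complex) set \<Rightarrow> nat" where
  "cdim W = vector_space.dim (\<lambda>c f. (\<lambda>x. c * f x)) W"

definition base_mset :: "nat list \<Rightarrow> nat multiset" where
  "base_mset ks = (\<Sum>j<length ks. replicate_mset (ks ! j) (j + 1))"

definition is_mset_partition :: "nat multiset multiset \<Rightarrow> nat multiset \<Rightarrow> bool" where
  "is_mset_partition P M \<longleftrightarrow> {#} \<notin># P \<and> sum_mset P = M"

definition is_partition :: "nat list \<Rightarrow> bool" where
  "is_partition \<mu> \<longleftrightarrow> sorted_wrt (\<ge>) \<mu> \<and> (\<forall>x\<in>set \<mu>. 0 < x)"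

end

theory Submission
  imports Defs
begin


interpretation cv: vector_space "(\<lambda>c f. (\<lambda>x. c * f x)) :: complex \<Rightarrow> ('a \<Rightarrow> complex) \<Rightarrow> ('a \<Rightarrow> complex)"
  by unfold_locales (auto simp: algebra_simps fun_eq_iff)

lemma cdim_cv: "cdim W = cv.dim W"
  by (simp add: cdim_def)

lemma sum_fun_apply: "(\<Sum>x\<in>A. f x) (e::'a) = (\<Sum>x\<in>A. (f x e :: complex))"
  by (induction A rule: infinite_finite_induct) auto

definition act :: "(nat \<Rightarrow> nat) \<Rightarrow> (nat \<Rightarrow> nat \<Rightarrow> nat) \<Rightarrow> (nat \<Rightarrow> nat \<Rightarrow> nat)" where
  "act \<sigma> e = (\<lambda>j i. e j (\<sigma> i))"

lemma perm_act_act: "perm_act \<sigma> f = (\<lambda>e. f (act \<sigma> e))"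
  by (simp add: perm_act_def act_def)

lemma act_inv: "\<sigma> permutes A \<Longrightarrow> act (inv \<sigma>) (act \<sigma> e) = e"
  by (auto simp: act_def fun_eq_iff permutes_inverses)

lemma orbit_dim:
  fixes S :: "(nat \<Rightarrow> nat \<Rightarrow> nat) set" and \<Phi> :: "(nat \<Rightarrow> nat \<Rightarrow> nat) \<Rightarrow> 'b"
  assumes fin: "finite S"
    and clo: "\<And>e \<sigma>. e \<in> S \<Longrightarrow> \<sigma> permutes {..<n} \<Longrightarrow> act \<sigma> e \<in> S"
    and inv: "\<And>e \<sigma>. e \<in> S \<Longrightarrow> \<sigma> permutes {..<n} \<Longrightarrow> \<Phi> (act \<sigma> e) = \<Phi> e"
    and tr: "\<And>e e'. e \<in> S \<Longrightarrow> e' \<in> S \<Longrightarrow> \<Phi> e = \<Phi> e' \<Longrightarrow> \<exists>\<sigma>. \<sigma> permutes {..<n} \<and> e' = act \<sigma> e"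
  shows "cdim {f. (\<forall>e. e \<notin> S \<longrightarrow> f e = 0) \<and> (\<forall>\<sigma>. \<sigma> permutes {..<n} \<longrightarrow> perm_act \<sigma> f = f)}
         = card (\<Phi> ` S)"
proof -
  let ?W = "{f. (\<forall>e. e \<notin> S \<longrightarrow> f e = 0) \<and> (\<forall>\<sigma>. \<sigma> permutes {..<n} \<longrightarrow> perm_act \<sigma> f = f)}"
  define ind where "ind P = (\<lambda>e. if e \<in> S \<and> \<Phi> e = P then 1 else (0::complex))" for P
  define B where "B = ind ` (\<Phi> ` S)"
  have indinj: "inj_on ind (\<Phi> ` S)"
  proof (rule inj_onI)
    fix P Q assume "P \<in> \<Phi> ` S" "Q \<in> \<Phi> ` S" "ind P = ind Q"
    then obtain e where "e \<in> S" "P = \<Phi> e" "ind P e = ind Q e" by auto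
    then show "P = Q" by (auto simp: ind_def split: if_splits)
  qed
  have cardB: "card B = card (\<Phi> ` S)"
    unfolding B_def using indinj by (rule card_image)
  have finB: "finite B" unfolding B_def using fin by auto
  have clo2: "act \<sigma> e \<in> S \<longleftrightarrow> e \<in> S" if "\<sigma> permutes {..<n}" for \<sigma> e
    using clo[OF _ that, of e] clo[OF _ permutes_inv[OF that], of "act \<sigma> e"] act_inv[OF that, of e]
    by auto
  have BW: "B \<subseteq> ?W"
  proof
    fix f assume "f \<in> B"
    then obtain P where P: "f = ind P" unfolding B_def by auto
    have "perm_act \<sigma> f = f" if "\<sigma> permutes {..<n}" for \<sigma>
      unfolding perm_act_act P ind_def fun_eq_iff
      using clo2[OF that] inv[OF _ that] by auto
    then show "f \<in> ?W" by (auto simp: P ind_def)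
  qed
  have WB: "?W \<subseteq> cv.span B"
  proof
    fix f assume fW: "f \<in> ?W"
    define r where "r P = (SOME e. e \<in> S \<and> \<Phi> e = P)" for P
    have r: "r (\<Phi> e) \<in> S \<and> \<Phi> (r (\<Phi> e)) = \<Phi> e" if "e \<in> S" for e
      unfolding r_def using that by (metis (mono_tags, lifting) someI)
    have feq: "f = (\<Sum>P\<in>\<Phi> ` S. (\<lambda>x. f (r P) * ind P x))"
    proof (rule ext)
      fix x
      show "f x = (\<Sum>P\<in>\<Phi> ` S. (\<lambda>x. f (r P) * ind P x)) x"
      proof (cases "x \<in> S")
        case False
        then show ?thesis using fW by (simp add: sum_fun_apply ind_def)
      next
        case True
        have "(\<Sum>P\<in>\<Phi> ` S. (\<lambda>x. f (r P) * ind P x)) x = (\<Sum>P\<in>\<Phi> ` S. (if P = \<Phi> x then f (r P) else 0))"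
          unfolding sum_fun_apply using True by (intro sum.cong) (auto simp: ind_def)
        also have "\<dots> = f (r (\<Phi> x))" using True fin by (simp add: sum.delta')
        also have "\<dots> = f x"
        proof -
          obtain \<sigma> where s: "\<sigma> permutes {..<n}" "x = act \<sigma> (r (\<Phi> x))"
            using tr[of "r (\<Phi> x)" x] r[OF True] True by auto
          have "perm_act \<sigma> f = f" using fW s(1) by auto
          then have "f (act \<sigma> (r (\<Phi> x))) = f (r (\<Phi> x))" unfolding perm_act_act by metis
          then show ?thesis using s(2) by simp
        qed
        finally show ?thesis by simp
      qed
    qed
    have "(\<Sum>P\<in>\<Phi> ` S. (\<lambda>x. f (r P) * ind P x)) \<in> cv.span B"
      by (intro cv.span_sum cv.span_scale cv.span_base) (auto simp: B_def)
    then show "f \<in> cv.span B" using feq by simp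
  qed
  have indep: "cv.independent B"
  proof (rule cv.independent_if_scalars_zero[OF finB])
    fix c v assume sum0: "(\<Sum>v\<in>B. (\<lambda>x. c v * v x)) = 0" and vB: "v \<in> B"
    then obtain e where e: "e \<in> S" "v = ind (\<Phi> e)" unfolding B_def by auto
    have "0 = (\<Sum>v\<in>B. (\<lambda>x. c v * v x)) e" using sum0 by simp
    also have "\<dots> = (\<Sum>w\<in>B. if w = v then c w else 0)"
      unfolding sum_fun_apply
    proof (intro sum.cong refl)
      fix w assume "w \<in> B"
      then obtain P where P: "P \<in> \<Phi> ` S" "w = ind P" unfolding B_def by auto
      show "c w * w e = (if w = v then c w else 0)"
      proof (cases "P = \<Phi> e")
        case True then show ?thesis using P e by (simp add: ind_def)
      next
        case False
        then have "w \<noteq> v" using indinj P e by (auto dest: inj_onD)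
        then show ?thesis using P e False by (simp add: ind_def)
      qed
    qed
    also have "\<dots> = c v" using finB vB by (simp add: sum.delta')
    finally show "c v = 0" by simp
  qed
  have "card B = cv.dim ?W"
    by (rule cv.basis_card_eq_dim[OF BW WB indep])
  then show ?thesis using cardB cdim_cv by metis
qed



definition col :: "nat list \<Rightarrow> (nat \<Rightarrow> nat \<Rightarrow> nat) \<Rightarrow> nat \<Rightarrow> nat multiset" where
  "col ks e i = (\<Sum>j<length ks. replicate_mset (e j i) (j+1))"

definition cols :: "nat \<Rightarrow> nat list \<Rightarrow> (nat \<Rightarrow> nat \<Rightarrow> nat) \<Rightarrow> nat multiset multiset" where
  "cols n ks e = image_mset (col ks e) (mset_set {..<n})"

definition Phi :: "nat \<Rightarrow> nat list \<Rightarrow> (nat \<Rightarrow> nat \<Rightarrow> nat) \<Rightarrow> nat multiset multiset" where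
  "Phi n ks e = filter_mset (\<lambda>c. c \<noteq> {#}) (cols n ks e)"

lemma count_col: "count (col ks e i) x = (if 0 < x \<and> x \<le> length ks then e (x-1) i else 0)"
proof -
  have "count (col ks e i) x = (\<Sum>j<length ks. if j = x - 1 \<and> 0 < x then e j i else 0)"
    unfolding col_def count_sum by (intro sum.cong) auto
  also have "\<dots> = (if 0 < x \<and> x \<le> length ks then e (x-1) i else 0)"
    by (cases "0 < x") (auto simp: sum.delta)
  finally show ?thesis .
qed

lemma count_base: "count (base_mset ks) x = (if 0 < x \<and> x \<le> length ks then ks ! (x-1) else 0)"
proof -
  have "count (base_mset ks) x = (\<Sum>j<length ks. if j = x - 1 \<and> 0 < x then ks ! j else 0)"
    unfolding base_mset_def count_sum by (intro sum.cong) auto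
  also have "\<dots> = (if 0 < x \<and> x \<le> length ks then ks ! (x-1) else 0)"
    by (auto simp: sum.If_cases)
  finally show ?thesis .
qed

lemma size_sum_ms: "size (\<Sum>j\<in>A. (f j :: 'a multiset)) = (\<Sum>j\<in>A. size (f j))"
  by (induction A rule: infinite_finite_induct) auto

lemma size_col: "size (col ks e i) = (\<Sum>j<length ks. e j i)"
  unfolding col_def size_sum_ms by simp

lemma perm_iff:
  fixes n :: nat shows "image_mset a (mset_set {..<n}) = image_mset b (mset_set {..<n}) \<longleftrightarrow>
   (\<exists>p. p permutes {..<n} \<and> (\<forall>i<n. a i = b (p i)))"
proof
  assume h: "image_mset a (mset_set {..<n}) = image_mset b (mset_set {..<n})"
  then have "mset (map a [0..<n]) = mset (map b [0..<n])"
    by (simp add: atLeast0LessThan)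
  then obtain p where p: "p permutes {..<length (map b [0..<n])}"
    "permute_list p (map b [0..<n]) = map a [0..<n]"
    by (rule mset_eq_permutation)
  have "a i = b (p i)" if "i < n" for i
  proof -
    have "map a [0..<n] ! i = permute_list p (map b [0..<n]) ! i" using p(2) by simp
    also have "\<dots> = map b [0..<n] ! p i" using p(1) that by (intro permute_list_nth) auto
    also have "\<dots> = b (p i)" using permutes_in_image[OF p(1)] that by simp
    finally show ?thesis using that by simp
  qed
  then show "\<exists>p. p permutes {..<n} \<and> (\<forall>i<n. a i = b (p i))" using p(1) by auto
next
  assume "\<exists>p. p permutes {..<n} \<and> (\<forall>i<n. a i = b (p i))"
  then obtain p where p: "p permutes {..<n}" "\<forall>i<n. a i = b (p i)" by auto
  have "image_mset b (mset_set {..<n}) = image_mset b (image_mset p (mset_set {..<n}))"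
    using p(1) by (simp add: image_mset_mset_set permutes_inj_on permutes_image)
  also have "\<dots> = image_mset a (mset_set {..<n})"
    unfolding multiset.map_comp using p(2) by (intro image_mset_cong) auto
  finally show "image_mset a (mset_set {..<n}) = image_mset b (mset_set {..<n})" by simp
qed

lemma zero_complete:
  assumes "size M = size N" "filter_mset (\<lambda>x. x \<noteq> z) M = filter_mset (\<lambda>x. x \<noteq> z) N"
  shows "M = N"
proof -
  have a: "M = filter_mset (\<lambda>x. x \<noteq> z) M + replicate_mset (count M z) z"
    by (metis (mono_tags, lifting) filter_eq_replicate_mset filter_mset_cong multiset_partition)
  have b: "N = filter_mset (\<lambda>x. x \<noteq> z) N + replicate_mset (count N z) z"
    by (metis (mono_tags, lifting) filter_eq_replicate_mset filter_mset_cong multiset_partition)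
  have "size M = size (filter_mset (\<lambda>x. x \<noteq> z) M) + count M z"
    by (subst a) simp
  moreover have "size N = size (filter_mset (\<lambda>x. x \<noteq> z) N) + count N z"
    by (subst b) simp
  ultimately have "count M z = count N z" using assms by simp
  then show ?thesis using a b assms(2) by simp
qed

lemma col_act: "\<sigma> permutes {..<n} \<Longrightarrow> col ks (act \<sigma> e) i = col ks e (\<sigma> i)"
  by (simp add: col_def act_def)

lemma Phi_act: "\<sigma> permutes {..<n} \<Longrightarrow> Phi n ks (act \<sigma> e) = Phi n ks e"
proof -
  assume s: "\<sigma> permutes {..<n}"
  have "cols n ks (act \<sigma> e) = cols n ks e"
    unfolding cols_def col_act[OF s] using s by (subst perm_iff) auto
  then show ?thesis by (simp add: Phi_def)
qed

lemma size_cols: "size (cols n ks e) = n" by (simp add: cols_def)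

lemma monoms_zero: "e \<in> monoms n ks \<Longrightarrow> (length ks \<le> j \<or> n \<le> i) \<Longrightarrow> e j i = 0"
  by (auto simp: monoms_def)

lemma Phi_trans:
  assumes e: "e \<in> monoms n ks" and e': "e' \<in> monoms n ks" and eq: "Phi n ks e = Phi n ks e'"
  shows "\<exists>\<sigma>. \<sigma> permutes {..<n} \<and> e' = act \<sigma> e"
proof -
  have "cols n ks e' = cols n ks e"
    apply (rule zero_complete[where z="{#}"])
    using eq unfolding size_cols Phi_def by simp_all
  then have "\<exists>p. p permutes {..<n} \<and> (\<forall>i<n. col ks e' i = col ks e (p i))"
    unfolding cols_def by (rule perm_iff[THEN iffD1])
  then obtain p where p: "p permutes {..<n}" "\<forall>i<n. col ks e' i = col ks e (p i)"
    by blast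
  have "e' j i = e j (p i)" for j i
  proof (cases "i < n")
    case True
    then have pi: "p i < n" using permutes_in_image[OF p(1)] by auto
    show ?thesis
    proof (cases "j < length ks")
      case True
      have "count (col ks e' i) (j+1) = count (col ks e (p i)) (j+1)" using p(2) \<open>i < n\<close> by simp
      then show ?thesis using True by (simp add: count_col)
    next
      case False
      then show ?thesis using monoms_zero[OF e] monoms_zero[OF e'] by auto
    qed
  next
    case False
    then have "p i = i" using p(1) by (simp add: permutes_not_in)
    then show ?thesis using False monoms_zero[OF e, of j i] monoms_zero[OF e', of j i] by simp
  qed
  then have "e' = act p e" unfolding act_def by (intro ext) simp
  then show ?thesis using p(1) by blast
qed



lemma sum_filter_nonempty: "sum_mset (filter_mset (\<lambda>c. c \<noteq> {#}) M) = sum_mset (M :: 'a multiset multiset)"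
  by (induction M) auto

lemma sum_cols: assumes e: "e \<in> monoms n ks" shows "sum_mset (cols n ks e) = base_mset ks"
proof (rule multiset_eqI)
  fix x
  have "count (sum_mset (cols n ks e)) x = (\<Sum>i<n. count (col ks e i) x)"
    unfolding cols_def sum_unfold_sum_mset[symmetric] count_sum ..
  also have "\<dots> = (\<Sum>i<n. if 0 < x \<and> x \<le> length ks then e (x-1) i else 0)"
    by (simp add: count_col)
  also have "\<dots> = (if 0 < x \<and> x \<le> length ks then (\<Sum>i<n. e (x-1) i) else 0)"
    by simp
  also have "\<dots> = count (base_mset ks) x"
    using e unfolding count_base monoms_def by auto
  finally show "count (sum_mset (cols n ks e)) x = count (base_mset ks) x" .
qed

lemma Phi_in: "e \<in> monoms n ks \<Longrightarrow> is_mset_partition (Phi n ks e) (base_mset ks) \<and> size (Phi n ks e) \<le> n"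
  unfolding is_mset_partition_def Phi_def
  using sum_cols[of e n ks] sum_filter_nonempty[of "cols n ks e"] size_filter_mset_lesseq[of _ "cols n ks e"]
  by (auto simp: size_cols)

lemma member_sub_sum: "c \<in># P \<Longrightarrow> count c x \<le> count (sum_mset P) x"
  by (metis multi_member_split sum_mset.add_mset count_union le_add1)

lemma Phi_surj:
  assumes P: "is_mset_partition P (base_mset ks)" and sz: "size P \<le> n"
  shows "P \<in> Phi n ks ` monoms n ks"
proof -
  obtain ps where ps: "mset ps = P" using ex_mset by blast
  have lenps: "length ps \<le> n" using sz ps by auto
  have nz: "{#} \<notin> set ps" using P ps by (auto simp: is_mset_partition_def)
  have sumps: "sum_list ps = base_mset ks"
    using P ps by (auto simp: is_mset_partition_def sum_mset_sum_list[symmetric])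
  have sub: "count c x \<le> count (base_mset ks) x" if "c \<in> set ps" for c x
    using member_sub_sum[of c P x] that P ps by (auto simp: is_mset_partition_def)
  define e where "e j i = (if i < length ps \<and> j < length ks then count (ps!i) (j+1) else 0)" for j i
  have colps: "col ks e i = ps ! i" if "i < length ps" for i
  proof (rule multiset_eqI)
    fix x
    have "count (ps ! i) x \<le> count (base_mset ks) x" using sub that by simp
    then show "count (col ks e i) x = count (ps ! i) x"
      unfolding count_col using that by (auto simp: e_def count_base)
  qed
  have colz: "col ks e i = {#}" if "length ps \<le> i" for i
    using that by (simp add: col_def e_def)
  have eM: "e \<in> monoms n ks"
    unfolding monoms_def
  proof (intro CollectI conjI allI impI)
    fix j i assume "length ks \<le> j \<or> n \<le> i" then show "e j i = 0" using lenps by (auto simp: e_def)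
  next
    fix j assume j: "j < length ks"
    have "(\<Sum>i<n. e j i) = (\<Sum>i<length ps. count (ps!i) (j+1))"
      by (rule sum.mono_neutral_cong_right) (use lenps j in \<open>auto simp: e_def\<close>)
    also have "\<dots> = count (sum_list ps) (j+1)"
      by (simp add: sum_list_sum_nth count_sum atLeast0LessThan)
    also have "\<dots> = ks ! j" using j by (simp add: sumps count_base)
    finally show "(\<Sum>i<n. e j i) = ks ! j" .
  qed
  have "[0..<n] = [0..<length ps] @ [length ps..<n]" using lenps
    by (metis le_add_diff_inverse upt_add_eq_append zero_le)
  then have "map (col ks e) [0..<n] = map (col ks e) [0..<length ps] @ map (col ks e) [length ps..<n]"
    by simp
  moreover have "map (col ks e) [0..<length ps] = ps"
    by (rule nth_equalityI) (auto simp: colps)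
  moreover have "filter (\<lambda>c. c \<noteq> {#}) (map (col ks e) [length ps..<n]) = []"
    by (auto simp: colz filter_empty_conv)
  moreover have "filter (\<lambda>c. c \<noteq> {#}) ps = ps" using nz by (auto simp: filter_id_conv)
  ultimately have "filter (\<lambda>c. c \<noteq> {#}) (map (col ks e) [0..<n]) = ps" by simp
  then have "Phi n ks e = P"
    unfolding Phi_def cols_def using ps
    by (metis atLeast0LessThan mset_filter mset_map mset_upt)
  then show ?thesis using eM by blast
qed

lemma mweight_col: "mweight ks e i = size (col ks e i)"
  by (simp add: mweight_def size_col)

lemma pad_mset:
  assumes "length \<mu> \<le> n"
  shows "image_mset (pad \<mu>) (mset_set {..<n}) = mset \<mu> + replicate_mset (n - length \<mu>) 0"
proof -
  have "[0..<n] = [0..<length \<mu>] @ [length \<mu>..<n]" using assms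
    by (metis le_add_diff_inverse upt_add_eq_append zero_le)
  moreover have "map (pad \<mu>) [0..<length \<mu>] = \<mu>"
    by (rule nth_equalityI) (auto simp: pad_def)
  moreover have "map (pad \<mu>) [length \<mu>..<n] = replicate (n - length \<mu>) 0"
    by (rule nth_equalityI) (auto simp: pad_def)
  ultimately have "map (pad \<mu>) [0..<n] = \<mu> @ replicate (n - length \<mu>) 0" by simp
  then show ?thesis
    by (metis atLeast0LessThan mset_append mset_map mset_replicate mset_upt)
qed

lemma filter_pad:
  assumes "is_partition \<mu>" "length \<mu> \<le> n"
  shows "filter_mset (\<lambda>k. k \<noteq> 0) (image_mset (pad \<mu>) (mset_set {..<n})) = mset \<mu>"
proof -
  have "filter_mset (\<lambda>k. k \<noteq> 0) (mset \<mu>) = mset \<mu>"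
    using assms(1) by (auto simp: is_partition_def filter_mset_eq_conv)
  then show ?thesis using pad_mset[OF assms(2)] by simp
qed

lemma sizePhi:
  "image_mset size (Phi n ks e) = filter_mset (\<lambda>k. k \<noteq> 0) (image_mset (mweight ks e) (mset_set {..<n}))"
proof -
  have "Phi n ks e = filter_mset (\<lambda>c. size c \<noteq> 0) (cols n ks e)"
    unfolding Phi_def by (intro filter_mset_cong) auto
  then have "image_mset size (Phi n ks e) = filter_mset (\<lambda>k. k \<noteq> 0) (image_mset size (cols n ks e))"
    using image_mset_filter_mset_swap[of size "\<lambda>k. k \<noteq> 0" "cols n ks e"] by simp
  also have "image_mset size (cols n ks e) = image_mset (mweight ks e) (mset_set {..<n})"
    unfolding cols_def multiset.map_comp by (intro image_mset_cong) (simp add: mweight_col)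
  finally show ?thesis .
qed

lemma weight_iff:
  assumes e: "e \<in> monoms n ks" and mu: "is_partition \<mu>" "length \<mu> \<le> n"
  shows "mweight ks e \<in> weight_orbit n (pad \<mu>) \<longleftrightarrow> image_mset size (Phi n ks e) = mset \<mu>"
proof
  assume "mweight ks e \<in> weight_orbit n (pad \<mu>)"
  then obtain \<sigma> where s: "\<sigma> permutes {..<n}" "mweight ks e = pad \<mu> \<circ> \<sigma>"
    unfolding weight_orbit_def by blast
  have "image_mset (mweight ks e) (mset_set {..<n}) = image_mset (pad \<mu>) (mset_set {..<n})"
    using s by (subst perm_iff) auto
  then show "image_mset size (Phi n ks e) = mset \<mu>"
    unfolding sizePhi using filter_pad[OF mu] by simp
next
  assume h: "image_mset size (Phi n ks e) = mset \<mu>"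
  have "image_mset (mweight ks e) (mset_set {..<n}) = image_mset (pad \<mu>) (mset_set {..<n})"
    by (rule zero_complete[where z=0]) (use h filter_pad[OF mu] in \<open>simp_all add: sizePhi\<close>)
  then obtain p where p: "p permutes {..<n}" "\<forall>i<n. mweight ks e i = pad \<mu> (p i)"
    unfolding perm_iff by blast
  have "mweight ks e i = (pad \<mu> \<circ> p) i" for i
  proof (cases "i < n")
    case True then show ?thesis using p(2) by simp
  next
    case False
    then have "p i = i" using p(1) by (simp add: permutes_not_in)
    moreover have "mweight ks e i = 0" using False monoms_zero[OF e] by (simp add: mweight_def)
    ultimately show ?thesis using False mu(2) by (simp add: pad_def)
  qed
  then have "mweight ks e = pad \<mu> \<circ> p" by (rule ext)
  then show "mweight ks e \<in> weight_orbit n (pad \<mu>)"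
    unfolding weight_orbit_def using p(1) by blast
qed



lemma monoms_finite: "finite (monoms n ks)"
proof -
  define N where "N = sum_list ks"
  define F where "F = {g :: nat \<Rightarrow> nat. \<forall>i. (i \<in> {..<n} \<longrightarrow> g i \<in> {..N}) \<and> (i \<notin> {..<n} \<longrightarrow> g i = 0)}"
  have fF: "finite F" unfolding F_def by (rule finite_set_of_finite_funs) auto
  have "monoms n ks \<subseteq> {e. \<forall>j. (j \<in> {..<length ks} \<longrightarrow> e j \<in> F) \<and> (j \<notin> {..<length ks} \<longrightarrow> e j = (\<lambda>_. 0))}"
  proof (intro subsetI CollectI allI conjI impI)
    fix e j assume e: "e \<in> monoms n ks"
    { assume j: "j \<in> {..<length ks}"
      have "e j i \<le> N" if "i < n" for i
      proof -
        have "e j i \<le> (\<Sum>i<n. e j i)" using that by (intro member_le_sum) auto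
        also have "\<dots> = ks ! j" using e j by (simp add: monoms_def)
        also have "\<dots> \<le> N" using j unfolding N_def by (simp add: elem_le_sum_list)
        finally show ?thesis .
      qed
      then show "e j \<in> F" unfolding F_def using monoms_zero[OF e] by auto }
    { assume "j \<notin> {..<length ks}" then show "e j = (\<lambda>_. 0)" using monoms_zero[OF e] by auto }
  qed
  moreover have "finite {e. \<forall>j. (j \<in> {..<length ks} \<longrightarrow> e j \<in> F) \<and> (j \<notin> {..<length ks} \<longrightarrow> e j = (\<lambda>_. 0))}"
    by (rule finite_set_of_finite_funs) (auto simp: fF)
  ultimately show ?thesis by (rule finite_subset)
qed

lemma monoms_act: assumes e: "e \<in> monoms n ks" and s: "\<sigma> permutes {..<n}" shows "act \<sigma> e \<in> monoms n ks"
  unfolding monoms_def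
proof (intro CollectI conjI allI impI)
  fix j i assume "length ks \<le> j \<or> n \<le> i"
  then show "act \<sigma> e j i = 0" using monoms_zero[OF e] s by (auto simp: act_def permutes_not_in)
next
  fix j assume j: "j < length ks"
  have "(\<Sum>i<n. act \<sigma> e j i) = (\<Sum>i<n. e j i)"
    unfolding act_def using sum.permute[OF s, of "e j"] by (simp add: comp_def)
  then show "(\<Sum>i<n. act \<sigma> e j i) = ks ! j" using e j by (simp add: monoms_def)
qed

theorem corollary3p12:
  fixes n :: nat and ks :: "nat list"
  shows "(\<forall>\<mu> :: nat list. is_partition \<mu> \<and> sum_list \<mu> = sum_list ks \<and> length \<mu> \<le> n \<longrightarrow>
            cdim (Sn_invariants n (sym_weight_space n ks \<mu>)) =
            card {P. is_mset_partition P (base_mset ks) \<and> image_mset size P = mset \<mu>}) \<and>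
         (cdim (Sn_invariants n (tensor_sym n ks)) =
            card {P. is_mset_partition P (base_mset ks) \<and> size P \<le> n})"
proof (intro conjI allI impI)
  fix \<mu> :: "nat list"
  assume "is_partition \<mu> \<and> sum_list \<mu> = sum_list ks \<and> length \<mu> \<le> n"
  then have mu: "is_partition \<mu>" "length \<mu> \<le> n" by auto
  define S where "S = {e \<in> monoms n ks. mweight ks e \<in> weight_orbit n (pad \<mu>)}"
  have S': "S = {e \<in> monoms n ks. image_mset size (Phi n ks e) = mset \<mu>}"
    unfolding S_def using weight_iff[OF _ mu] by blast
  have eqW: "Sn_invariants n (sym_weight_space n ks \<mu>) =
     {f. (\<forall>e. e \<notin> S \<longrightarrow> f e = 0) \<and> (\<forall>\<sigma>. \<sigma> permutes {..<n} \<longrightarrow> perm_act \<sigma> f = f)}"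
    unfolding Sn_invariants_def sym_weight_space_def tensor_sym_def S_def by blast
  have "cdim {f. (\<forall>e. e \<notin> S \<longrightarrow> f e = 0) \<and> (\<forall>\<sigma>. \<sigma> permutes {..<n} \<longrightarrow> perm_act \<sigma> f = f)}
        = card (Phi n ks ` S)"
  proof (rule orbit_dim)
    show "finite S" unfolding S_def using monoms_finite by auto
    show "act \<sigma> e \<in> S" if "e \<in> S" "\<sigma> permutes {..<n}" for e \<sigma>
      using that monoms_act Phi_act unfolding S' by auto
    show "Phi n ks (act \<sigma> e) = Phi n ks e" if "e \<in> S" "\<sigma> permutes {..<n}" for e \<sigma>
      using that Phi_act by auto
    show "\<exists>\<sigma>. \<sigma> permutes {..<n} \<and> e' = act \<sigma> e" if "e \<in> S" "e' \<in> S" "Phi n ks e = Phi n ks e'" for e e'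
      using that Phi_trans unfolding S' by auto
  qed
  moreover have "Phi n ks ` S = {P. is_mset_partition P (base_mset ks) \<and> image_mset size P = mset \<mu>}"
  proof (intro equalityI subsetI)
    fix P assume "P \<in> Phi n ks ` S"
    then show "P \<in> {P. is_mset_partition P (base_mset ks) \<and> image_mset size P = mset \<mu>}"
      unfolding S' using Phi_in by auto
  next
    fix P assume P: "P \<in> {P. is_mset_partition P (base_mset ks) \<and> image_mset size P = mset \<mu>}"
    then have "size P \<le> n" using mu(2) by (metis (mono_tags, lifting) mem_Collect_eq size_image_mset size_mset)
    then obtain e where "e \<in> monoms n ks" "P = Phi n ks e" using Phi_surj P by blast
    then show "P \<in> Phi n ks ` S" unfolding S' using P by auto
  qed
  ultimately show "cdim (Sn_invariants n (sym_weight_space n ks \<mu>)) =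
            card {P. is_mset_partition P (base_mset ks) \<and> image_mset size P = mset \<mu>}"
    using eqW by simp
next
  have eqW: "Sn_invariants n (tensor_sym n ks) =
     {f. (\<forall>e. e \<notin> monoms n ks \<longrightarrow> f e = 0) \<and> (\<forall>\<sigma>. \<sigma> permutes {..<n} \<longrightarrow> perm_act \<sigma> f = f)}"
    unfolding Sn_invariants_def tensor_sym_def by blast
  have "cdim {f. (\<forall>e. e \<notin> monoms n ks \<longrightarrow> f e = 0) \<and> (\<forall>\<sigma>. \<sigma> permutes {..<n} \<longrightarrow> perm_act \<sigma> f = f)}
        = card (Phi n ks ` monoms n ks)"
    by (rule orbit_dim[OF monoms_finite monoms_act Phi_act Phi_trans])
  moreover have "Phi n ks ` monoms n ks = {P. is_mset_partition P (base_mset ks) \<and> size P \<le> n}"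
    using Phi_in Phi_surj by blast
  ultimately show "cdim (Sn_invariants n (tensor_sym n ks)) =
            card {P. is_mset_partition P (base_mset ks) \<and> size P \<le> n}"
    using eqW by simp
qed

end
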